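(* Let $n\ge 2$ and $x\in\mathbb{R}^{n+1}$ with $|x|<1$, and let $f: S^n \to (0,\infty)$ be $f(y) = |y-x|$. Then, as symmetric 2-tensors on $S^n$, $$\frac{\nabla_{S^n}^2 f}{f} \geq -\frac{1}{4}\, g .$$ Equivalently, for every $y\in S^n$ and every unit vector $\theta\in\mathbb{R}^{n+1}$ with $\langle y,\theta\rangle = 0$, $$\frac{1}{|y-x|^2}\left(\langle x,y\rangle - \frac{\langle x,\theta\rangle^2}{|y-x|^2}\right) \geq -\frac14 .$$
   Context: $S^n\subset\mathbb{R}^{n+1}$ is the unit sphere with its canonical Riemannian metric $g$, and $\nabla_{S^n}^2$ denotes the Riemannian Hessian (with respect to the Levi-Civita connection of $g$) of a function on $S^n$. $\langle\cdot,\cdot\rangle$ and $|\cdot|$ are the Euclidean inner product and norm on $\mathbb{R}^{n+1}$. *)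

theory Defs
  imports "HOL-Analysis.Analysis"
begin

text \<open>Unit sphere S^n in R^(n+1), with R^(n+1) modelled as real^'n, CARD('n) = n+1.\<close>

definition on_sphere :: "'a::real_normed_vector \<Rightarrow> bool" where
  "on_sphere y \<longleftrightarrow> norm y = 1"

definition sphere_geodesic :: "'a::real_inner \<Rightarrow> 'a \<Rightarrow> real \<Rightarrow> 'a" where
  "sphere_geodesic y v t = cos (t * norm v) *\<^sub>R y + sin (t * norm v) *\<^sub>R (v /\<^sub>R norm v)"

text \<open>Riemannian Hessian quadratic form of f at y in direction v (tangent):
  Hess f (v,v) = (f o exp_y(t v))''(0). Only values of f on the sphere are used.\<close>

definition sphere_hessian :: "('a::real_inner \<Rightarrow> real) \<Rightarrow> 'a \<Rightarrow> 'a \<Rightarrow> real" where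
  "sphere_hessian f y v = deriv (deriv (\<lambda>t. f (sphere_geodesic y v t))) 0"

end

theory Submission
  imports Defs
begin

lemma key_ineq:
  fixes a b r D :: real
  assumes "a^2+b^2 \<le> r^2" "D = 1 + r^2 - 2*a" "D>0"
  shows "(a - b^2/D)/D \<ge> -1/4"
proof -
  have "4*a*D - 4*b^2 + D^2 \<ge> 4*a*D - 4*(r^2-a^2) + D^2" using assms(1) by simp
  also have "4*a*D - 4*(r^2-a^2) + D^2 = (1-r^2)^2" unfolding assms(2) by (simp add: power2_eq_square algebra_simps)
  finally have h: "4*a*D - 4*b^2 + D^2 \<ge> 0" by (smt (verit) zero_le_power2)
  have "(a - b^2/D)/D = (a*D - b^2)/D^2"
    using assms(3) by (simp add: field_simps power2_eq_square)
  also have "\<dots> \<ge> -1/4" using h assms(3) by (simp add: field_simps)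
  finally show ?thesis .
qed

lemma alg: fixes s a b R :: real assumes "R > 0"
  shows "(s^2 * a * R - (- s * b) * ((- s * b) / R)) / (R * R) / R = s^2 * ((a - b^2 / (R*R)) / (R*R))"
  using assms by (simp add: field_simps power2_eq_square)

lemma cs_ineq: fixes c s a b :: real shows "(c * a + s * b)^2 \<le> (c^2 + s^2) * (a^2+b^2)"
proof -
  have "(c^2 + s^2) * (a^2+b^2) - (c * a + s * b)^2 = (c*b - s*a)^2" by (simp add: power2_eq_square algebra_simps)
  thus ?thesis by (smt (verit) zero_le_power2)
qed

lemma hess_formula:
  fixes y v x :: "'a::real_inner"
  assumes y1: "norm y = 1" and yv: "y \<bullet> v = 0" and v0: "v \<noteq> 0" and x1: "norm x < 1"
  shows "sphere_hessian (\<lambda>z. norm (z - x)) y v / norm (y - x) \<ge> - (1/4) * (v \<bullet> v)"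
proof -
  define sv where "sv = norm v"
  define th where "th = v /\<^sub>R sv"
  define a where "a = x \<bullet> y"
  define b where "b = x \<bullet> th"
  define r where "r = norm x"
  have s0: "sv > 0" using v0 sv_def by simp
  have thth: "th \<bullet> th = 1" using s0 unfolding th_def sv_def
    by (simp add: power2_norm_eq_inner[symmetric] power2_eq_square)
  have yth: "y \<bullet> th = 0" unfolding th_def using yv by (simp add: inner_commute)
  have thy: "th \<bullet> y = 0" using yth by (simp add: inner_commute)
  have sc: "cos z * cos z + sin z * sin z = 1" for z :: real
    using sin_cos_squared_add[of z] by (simp add: power2_eq_square)
  have xc: "th \<bullet> x = x \<bullet> th" "y \<bullet> x = x \<bullet> y" by (simp_all add: inner_commute)
  have yy: "y \<bullet> y = 1" using y1 by (simp add: power2_norm_eq_inner[symmetric])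
  have xx: "x \<bullet> x = r^2" unfolding r_def by (simp add: power2_norm_eq_inner)
  define q where "q t = 1 + r^2 - 2*(cos (t * sv) * a + sin (t * sv) * b)" for t
  have geo: "sphere_geodesic y v t = cos (t * sv) *\<^sub>R y + sin (t * sv) *\<^sub>R th" for t
    unfolding sphere_geodesic_def th_def sv_def by simp
  have nq: "norm (sphere_geodesic y v t - x) = sqrt (q t)" for t
  proof -
    have "(norm (sphere_geodesic y v t - x))^2 = q t"
      unfolding power2_norm_eq_inner geo q_def
      by (simp add: inner_diff_left inner_diff_right inner_add_left inner_add_right
          yy yth thth xx a_def b_def thy xc algebra_simps power2_eq_square sc)
    thus ?thesis by (metis real_sqrt_unique norm_ge_zero)
  qed
  have bes: "a^2 + b^2 \<le> r^2"
  proof -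
    have "0 \<le> (x - a *\<^sub>R y - b *\<^sub>R th) \<bullet> (x - a *\<^sub>R y - b *\<^sub>R th)" by simp
    also have "\<dots> = r^2 - a^2 - b^2"
      by (simp add: inner_diff_left inner_diff_right yy yth thy xc thth xx a_def b_def
          algebra_simps power2_eq_square)
    finally show ?thesis by simp
  qed
  have qpos: "q t > 0" for t
  proof -
    have "\<bar>cos (t * sv) * a + sin (t * sv) * b\<bar> \<le> r"
    proof -
      have "(cos (t * sv) * a + sin (t * sv) * b)^2 \<le> (cos (t * sv)^2 + sin(t * sv)^2) * (a^2+b^2)"
        by (rule cs_ineq)
      also have "\<dots> \<le> r^2" by (simp only: sin_cos_squared_add2 mult_1_left) (rule bes)
      finally show ?thesis using r_def by (metis abs_le_square_iff abs_norm_cancel)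
    qed
    hence c: "cos (t * sv) * a + sin (t * sv) * b \<le> r" by (simp add: abs_le_iff)
    have "r < 1" using x1 r_def by simp
    hence "(1-r)^2 > 0" by simp
    moreover have "(1-r)^2 = 1 + r^2 - 2*r" by (simp add: power2_eq_square algebra_simps)
    ultimately show ?thesis unfolding q_def using c by (smt (verit))
  qed
  define N where "N t = sv * (sin (t * sv) * a - cos (t * sv) * b)" for t
  have d1: "((\<lambda>t. sqrt (q t)) has_field_derivative N t / sqrt (q t)) (at t)" for t
  proof -
    have "(q has_field_derivative 2 * N t) (at t)"
      unfolding q_def N_def
      by (auto intro!: derivative_eq_intros simp: algebra_simps)
    from DERIV_real_sqrt[OF qpos[of t]] this
    have "((\<lambda>t. sqrt (q t)) has_field_derivative inverse (sqrt (q t)) / 2 * (2 * N t)) (at t)"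
      by (rule DERIV_chain2)
    thus ?thesis by (simp add: field_simps)
  qed
  have dh: "deriv (\<lambda>t. norm (sphere_geodesic y v t - x)) = (\<lambda>t. N t / sqrt (q t))"
    unfolding nq using d1 DERIV_imp_deriv by blast
  define N' where "N' t = sv^2 * (cos (t * sv) * a + sin (t * sv) * b)" for t
  have dN: "(N has_field_derivative N' t) (at t)" for t
    unfolding N_def N'_def by (auto intro!: derivative_eq_intros simp: algebra_simps power2_eq_square)
  have d2: "((\<lambda>t. N t / sqrt (q t)) has_field_derivative
      (N' 0 * sqrt (q 0) - N 0 * (N 0 / sqrt (q 0))) / (sqrt (q 0) * sqrt (q 0))) (at 0)"
    using qpos[of 0] by (intro DERIV_divide dN d1) simp
  have hs: "sphere_hessian (\<lambda>z. norm (z - x)) y v =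
      (N' 0 * sqrt (q 0) - N 0 * (N 0 / sqrt (q 0))) / (sqrt (q 0) * sqrt (q 0))"
    unfolding sphere_hessian_def dh using d2 DERIV_imp_deriv by blast
  have ny: "norm (y - x) = sqrt (q 0)" using nq[of 0] unfolding geo by simp
  have N0: "N 0 = - sv * b" and N'0: "N' 0 = sv^2 * a" unfolding N_def N'_def by simp_all
  have q0: "q 0 = 1 + r^2 - 2*a" unfolding q_def by simp
  have sq: "sqrt (q 0) * sqrt (q 0) = q 0" using qpos[of 0] by simp
  have e: "sphere_hessian (\<lambda>z. norm (z - x)) y v / norm (y - x) = sv^2 * ((a - b^2 / q 0) / q 0)"
    unfolding hs ny N0 N'0 using alg[of "sqrt (q 0)" sv a b] qpos[of 0] by simp
  have "- (1/4) * (v \<bullet> v) = sv^2 * (-1/4)" unfolding sv_def by (simp add: power2_norm_eq_inner)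
  also have "\<dots> \<le> sv^2 * ((a - b^2 / q 0) / q 0)"
    using key_ineq[OF bes q0 qpos[of 0]] by (intro mult_left_mono) auto
  finally show ?thesis using e by simp
qed

theorem mainTheorem2:
  fixes x :: "real ^ 'n"
  assumes "CARD('n) \<ge> 3"
    and "norm x < 1"
  shows "\<forall>y v. on_sphere y \<and> y \<bullet> v = 0 \<longrightarrow>
           sphere_hessian (\<lambda>z. norm (z - x)) y v / norm (y - x) \<ge> - (1/4) * (v \<bullet> v)"
proof (intro allI impI)
  fix y v :: "real ^ 'n"
  assume h: "on_sphere y \<and> y \<bullet> v = 0"
  show "sphere_hessian (\<lambda>z. norm (z - x)) y v / norm (y - x) \<ge> - (1/4) * (v \<bullet> v)"
  proof (cases "v = 0")
    case True
    have "sphere_geodesic y v = (\<lambda>t. y)" unfolding sphere_geodesic_def True by (rule ext) simp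
    hence "sphere_hessian (\<lambda>z. norm (z - x)) y v = 0"
      unfolding sphere_hessian_def by simp
    thus ?thesis using True by simp
  next
    case False
    thus ?thesis using hess_formula[of y v x] h assms(2) by (simp add: on_sphere_def)
  qed
qed

end
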